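(* For all $e,f\in\mathrm{Exp}$, if $e\mathrel{\dot\equiv}f$ then $e\sim f$.
   Context: Fix a finite set $T$ of primitive tests, a set $\mathrm{Act}$ of atomic actions, a set $\mathrm{Out}$ of return values, and a semiring $(S,+,\cdot,0,1)$ that is positive ($x+y=0\Rightarrow x=y=0$), refinement (whenever $x+y=z+w$ there exist $s,t,u,v$ with $s+t=x$, $s+u=z$, $u+v=y$, $t+v=w$) and Conway (with ${}^*:S\to S$ satisfying $(a+b)^*=a^*(ba^* )^*$, $(ab)^*=1+a(ba)^*b$). Tests: $b,c\in\mathrm{BExp}::=\mathtt{0}\mid\mathtt{1}\mid t\ (t\in T)\mid\bar b\mid b+c\mid bc$ ($\mathtt 0,\mathtt 1$ false/true, distinct from semiring $0,1$); $\equiv_{BA}$ is Boolean equivalence; $\mathrm{At}$ is the finite set of atoms of the free Boolean algebra on $T$, atoms also regarded as tests; $\alpha\le b$ means $\alpha$ entails $b$. Expressions: $e,f\in\mathrm{Exp}::= p\in\mathrm{Act}\mid b\in\mathrm{BExp}\mid e+_b f\mid e;f\mid e^{(b)}\mid v\in\mathrm{Out}\mid e\oplus_{r,s} f\ (r,s\in S)$; $\odot r:=\mathtt 1\oplus_{r,0}\mathtt 0$. $\mathcal M_\omega(X)$: finitely supported maps $X\to S$, pointwise operations; $\delta_x$ indicator of $x$; $\nu[A]=\sum_{x\in A}\nu(x)$. A wGKAT automaton is $(X,\beta)$ with $\beta:X\to\mathcal M_\omega(\{\mathsf{acc},\mathsf{rej}\}+\mathrm{Out}+\mathrm{Act}\times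 X)^{\mathrm{At}}$. A map $h:X\to Y$ between automata $(X,\beta),(Y,\gamma)$ is a homomorphism if for all $x,\alpha$: $\gamma(h(x))_\alpha(o)=\beta(x)_\alpha(o)$ for $o\in\{\mathsf{acc},\mathsf{rej}\}+\mathrm{Out}$, and $\gamma(h(x))_\alpha(p,y)=\beta(x)_\alpha[\{p\}\times h^{-1}(y)]$. A relation $R\subseteq X\times Y$ is a bisimulation if there is $\rho:R\to\mathcal M_\omega(\{\mathsf{acc},\mathsf{rej}\}+\mathrm{Out}+\mathrm{Act}\times R)^{\mathrm{At}}$ making both projections homomorphisms from $(R,\rho)$; $e\sim f$ means some bisimulation on $(\mathrm{Exp},\partial)$ contains $(e,f)$. The derivative automaton: $\partial(b)_\alpha=\delta_{\mathsf{acc}}$ if $\alpha\le b$, else $\delta_{\mathsf{rej}}$; $\partial(v)_\alpha=\delta_v$; $\partial(p)_\alpha=\delta_{(p,\mathtt 1)}$; $\partial(e+_bf)_\alpha=\partial(e)_\alpha$ if $\alpha\le b$, else $\partial(f)_\alpha$; $\partial(e\oplus_{r,s}f)_\alpha=r\partial(e)_\alpha+s\partial(f)_\alpha$; $\partial(e;f)_\alpha=\sum_x\partial(e)_\alpha(x)c_{\alpha,f}(x)$ with $c_{\alpha,f}(\mathsf{acc})=\partial(f)_\alpha$, $c_{\alpha,f}(x)=\delta_x$ for $x\in\{\mathsf{rej}\}\cup\mathrm{Out}$, $c_{\alpha,f}(p,e')=\delta_{(p,e';f)}$; $\partial(e^{(b)})_\alpha(x)$ is $1$ if $x=\mathsf{acc}$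 and $\alpha\le\bar b$; $\partial(e)_\alpha(\mathsf{acc})^*\partial(e)_\alpha(x)$ if $x\in\{\mathsf{rej}\}\cup\mathrm{Out}$ and $\alpha\le b$; $\partial(e)_\alpha(\mathsf{acc})^*\partial(e)_\alpha(p,e')$ if $x=(p,e';e^{(b)})$ and $\alpha\le b$; $0$ otherwise. $E:\mathrm{Exp}\to S^{\mathrm{At}}$: $E(p)_\alpha=E(v)_\alpha=0$; $E(b)_\alpha=1$ if $\alpha\le b$ else $0$; $E(e\oplus_{r,s}f)_\alpha=rE(e)_\alpha+sE(f)_\alpha$; $E(e+_bf)_\alpha=E(e)_\alpha$ if $\alpha\le b$ else $E(f)_\alpha$; $E(e;f)_\alpha=E(e)_\alpha E(f)_\alpha$; $E(e^{(b)})_\alpha=E(\bar b)_\alpha$. The relation $\equiv$ is the smallest congruence on $\mathrm{Exp}$ (tests taken up to $\equiv_{BA}$; sequencing binds tighter than $\oplus$, $\odot$ binds tightest) containing, for all $e,f,g\in\mathrm{Exp}$, tests $b,c$, $v\in\mathrm{Out}$, $r,s,t,u\in S$: (G1) $e+_be\equiv e$; (G2) $e+_bf\equiv b;e+_bf$; (G3) $e+_bf\equiv f+_{\bar b}e$; (G4) $(e+_bf)+_cg\equiv e+_{bc}(f+_cg)$; (D1) $e\oplus_{r,s}(f+_bg)\equiv(e\oplus_{r,s}f)+_b(e\oplus_{r,s}g)$; (D2) $e\oplus_{r,s}(f\oplus_{t,u}g)\equiv e\oplus_{r,1}(f\oplus_{st,su}g)$; (D3) $b;(e\oplus_{r,s}f)\equiv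 b;(b;e\oplus_{r,s}b;f)$; (S1) $\mathtt 1;e\equiv e\equiv e;\mathtt 1$; (S2) $(e;f);g\equiv e;(f;g)$; (S3) $\mathtt 0;e\equiv\mathtt 0$; (S4) $(e\oplus_{r,s}f);g\equiv e;g\oplus_{r,s}f;g$; (S5) $(e+_bf);g\equiv e;g+_bf;g$; (S6) $v;e\equiv v$; (S7) $b;c\equiv bc$; (L1) $e^{(b)}\equiv e;e^{(b)}+_b\mathtt 1$; (C1) $\odot1\equiv\mathtt 1$; (C2) $\odot0;e\equiv\odot0$; (W1) $e\oplus_{r,s}e\equiv\odot(r+s);e$; (W2) $e\oplus_{r,s}f\equiv f\oplus_{s,r}e$; (W3) $e\oplus_{r,s}(f\oplus_{t,u}g)\equiv(e\oplus_{r,st}f)\oplus_{1,su}g$; (W4) $e\oplus_{ru,s}f\equiv(\odot u;e)\oplus_{r,s}f$; and closed under the rules (L2) if $e\equiv(f\oplus_{r,s}\mathtt 1)+_cg$ then $c;e^{(b)}\equiv c;((\odot(s^*r);f;e^{(b)})+_b\mathtt 1)$; (F1) if $g\equiv e;g+_bf$ and $E(e)_\alpha=0$ for all $\alpha\in\mathrm{At}$ then $g\equiv e^{(b)};f$. Systems of equations: for a finite set $X$ of indeterminates, a term over $X$ is a generalized guarded sum $\mathrm{GS}_{\alpha\in\mathrm{At}}w_\alpha$ (where $\mathrm{GS}_{\alpha\in\emptyset}:=\mathtt 0$ and $\mathrm{GS}_{\alpha\in\Phi}w_\alpha:=w_\gamma+_\gamma\mathrm{GS}_{\alpha\in\Phi\setminus\{\gamma\}}w_\alpha$)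 of weighted sums $w_\alpha=\bigoplus_{i\in I}r_i\cdot t_i$ (with $I$ finite, $\bigoplus_{i\in I}r_i\cdot t_i:=t_j\oplus_{r_j,1}\bigoplus_{i\in I\setminus\{j\}}r_i\cdot t_i$, empty sum $\odot0$), where each $t_i$ is either an expression $f\in\mathrm{Exp}$ or a formal product $g\,x$ with $g\in\mathrm{Exp}$, $x\in X$. A system is $(X,\tau)$ with $X$ finite and $\tau$ assigning a term to each $x\in X$; it is Salomaa if every $g$ occurring in a subterm $g\,x$ of any $\tau(x)$ satisfies $E(g)_\alpha=0$ for all $\alpha$. For $h:X\to\mathrm{Exp}$, $h^\#$ maps a term to the expression obtained by replacing each $g\,x$ by $g;h(x)$. For a congruence $R$, $h$ is a solution up to $R$ if $(h(x),h^\#(\tau(x)))\in R$ for all $x$. Let $\dot\equiv$ be the least congruence containing $\equiv$ and closed under the rule (UA): if $(X,\tau)$ is a Salomaa system and $f,g:X\to\mathrm{Exp}$ are both solutions of $(X,\tau)$ up to $\dot\equiv$, then $f(x)\mathrel{\dot\equiv}g(x)$ for all $x\in X$. *)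

theory Defs
  imports Main
begin

datatype 't bexp = BZero | BOne | Prim 't | BNot "'t bexp" | BOr "'t bexp" "'t bexp" | BAnd "'t bexp" "'t bexp"

text \<open>Atoms of the free Boolean algebra on the finite set T of primitive tests are
  identified with valuations, i.e. subsets of T (the primitive tests that hold).
  beval a b means that the atom a entails b.\<close>

type_synonym 't atom = "'t set"

primrec beval :: "'t atom \<Rightarrow> 't bexp \<Rightarrow> bool" where
  "beval a BZero = False"
| "beval a BOne = True"
| "beval a (Prim t) = (t \<in> a)"
| "beval a (BNot b) = (\<not> beval a b)"
| "beval a (BOr b c) = (beval a b \<or> beval a c)"
| "beval a (BAnd b c) = (beval a b \<and> beval a c)"

definition ba_equiv :: "'t bexp \<Rightarrow> 't bexp \<Rightarrow> bool" where
  "ba_equiv b c \<longleftrightarrow> (\<forall>a. beval a b = beval a c)"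

definition atom_test :: "'t::finite atom \<Rightarrow> 't bexp" where
  "atom_test a = foldr (\<lambda>t acc. BAnd (if t \<in> a then Prim t else BNot (Prim t)) acc)
                       (SOME xs. set xs = UNIV \<and> distinct xs) BOne"

datatype ('t, 'p, 'v, 's) exp =
    Act 'p
  | Tst "'t bexp"
  | GChoice "('t, 'p, 'v, 's) exp" "'t bexp" "('t, 'p, 'v, 's) exp"
  | Seq "('t, 'p, 'v, 's) exp" "('t, 'p, 'v, 's) exp"
  | Loop "('t, 'p, 'v, 's) exp" "'t bexp"
  | Ret 'v
  | WChoice "('t, 'p, 'v, 's) exp" 's 's "('t, 'p, 'v, 's) exp"

definition odot :: "'s::{semiring_0,monoid_mult} \<Rightarrow> ('t, 'p, 'v, 's) exp" where
  "odot r = WChoice (Tst BOne) r 0 (Tst BZero)"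

datatype ('p, 'v, 'x) outc = Acc | Rej | Rv 'v | Tr 'p 'x

definition fin_supp :: "('a \<Rightarrow> 's::zero) \<Rightarrow> bool" where
  "fin_supp \<nu> \<longleftrightarrow> finite {x. \<nu> x \<noteq> 0}"

definition mass :: "('a \<Rightarrow> 's::comm_monoid_add) \<Rightarrow> 'a set \<Rightarrow> 's" where
  "mass \<nu> A = (\<Sum>x\<in>{x\<in>A. \<nu> x \<noteq> 0}. \<nu> x)"

definition is_automaton ::
  "'x set \<Rightarrow> ('x \<Rightarrow> 't atom \<Rightarrow> ('p, 'v, 'x) outc \<Rightarrow> 's::zero) \<Rightarrow> bool" where
  "is_automaton X \<beta> \<longleftrightarrow>
     (\<forall>x\<in>X. \<forall>a. fin_supp (\<beta> x a) \<and> (\<forall>p y. \<beta> x a (Tr p y) \<noteq> 0 \<longrightarrow> y \<in> X))"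

definition is_hom ::
  "'x set \<Rightarrow> ('x \<Rightarrow> 't atom \<Rightarrow> ('p, 'v, 'x) outc \<Rightarrow> 's::comm_monoid_add)
   \<Rightarrow> 'y set \<Rightarrow> ('y \<Rightarrow> 't atom \<Rightarrow> ('p, 'v, 'y) outc \<Rightarrow> 's) \<Rightarrow> ('x \<Rightarrow> 'y) \<Rightarrow> bool" where
  "is_hom X \<beta> Y \<gamma> h \<longleftrightarrow>
     (\<forall>x\<in>X. h x \<in> Y \<and>
        (\<forall>a. \<gamma> (h x) a Acc = \<beta> x a Acc
           \<and> \<gamma> (h x) a Rej = \<beta> x a Rej
           \<and> (\<forall>v. \<gamma> (h x) a (Rv v) = \<beta> x a (Rv v))
           \<and> (\<forall>p y. y \<in> Y \<longrightarrow>
                 \<gamma> (h x) a (Tr p y) = mass (\<beta> x a) {Tr p x' | x'. x' \<in> X \<and> h x' = y})))"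

definition is_bisim ::
  "'x set \<Rightarrow> ('x \<Rightarrow> 't atom \<Rightarrow> ('p, 'v, 'x) outc \<Rightarrow> 's::comm_monoid_add)
   \<Rightarrow> 'y set \<Rightarrow> ('y \<Rightarrow> 't atom \<Rightarrow> ('p, 'v, 'y) outc \<Rightarrow> 's) \<Rightarrow> ('x \<times> 'y) set \<Rightarrow> bool" where
  "is_bisim X \<beta> Y \<gamma> R \<longleftrightarrow> R \<subseteq> X \<times> Y \<and>
     (\<exists>\<rho>. is_automaton R \<rho> \<and> is_hom R \<rho> X \<beta> fst \<and> is_hom R \<rho> Y \<gamma> snd)"

primrec der :: "('s::{semiring_0,monoid_mult} \<Rightarrow> 's) \<Rightarrow> ('t, 'p, 'v, 's) exp \<Rightarrow> 't atom
                 \<Rightarrow> ('p, 'v, ('t, 'p, 'v, 's) exp) outc \<Rightarrow> 's" where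
  "der st (Tst b) = (\<lambda>a y. if beval a b then (if y = Acc then 1 else 0)
                                     else (if y = Rej then 1 else 0))"
| "der st (Ret v) = (\<lambda>a y. if y = Rv v then 1 else 0)"
| "der st (Act p) = (\<lambda>a y. if y = Tr p (Tst BOne) then 1 else 0)"
| "der st (GChoice e b f) = (\<lambda>a y. if beval a b then der st e a y else der st f a y)"
| "der st (WChoice e r s f) = (\<lambda>a y. r * der st e a y + s * der st f a y)"
| "der st (Seq e f) = (\<lambda>a y. \<Sum>x\<in>{x. der st e a x \<noteq> 0}. der st e a x *
       (case x of Acc \<Rightarrow> der st f a y
                | Tr p e' \<Rightarrow> (if y = Tr p (Seq e' f) then 1 else 0)
                | _ \<Rightarrow> (if y = x then 1 else 0)))"
| "der st (Loop e b) = (\<lambda>a y.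
       if \<not> beval a b then (if y = Acc then 1 else 0)
       else (case y of
               Acc \<Rightarrow> 0
             | Rej \<Rightarrow> st (der st e a Acc) * der st e a Rej
             | Rv v \<Rightarrow> st (der st e a Acc) * der st e a (Rv v)
             | Tr p g \<Rightarrow> (case g of
                           Seq e' h \<Rightarrow> (if h = Loop e b then st (der st e a Acc) * der st e a (Tr p e') else 0)
                         | _ \<Rightarrow> 0)))"

definition bisimilar :: "('s::{semiring_0,monoid_mult} \<Rightarrow> 's) \<Rightarrow> ('t, 'p, 'v, 's) exp \<Rightarrow> ('t, 'p, 'v, 's) exp \<Rightarrow> bool" where
  "bisimilar st e f \<longleftrightarrow> (\<exists>R. is_bisim UNIV (der st) UNIV (der st) R \<and> (e, f) \<in> R)"

primrec Ef :: "('t, 'p, 'v, 's::{semiring_0,monoid_mult}) exp \<Rightarrow> 't atom \<Rightarrow> 's" where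
  "Ef (Act p) a = 0"
| "Ef (Ret v) a = 0"
| "Ef (Tst b) a = (if beval a b then 1 else 0)"
| "Ef (WChoice e r s f) a = r * Ef e a + s * Ef f a"
| "Ef (GChoice e b f) a = (if beval a b then Ef e a else Ef f a)"
| "Ef (Seq e f) a = Ef e a * Ef f a"
| "Ef (Loop e b) a = (if beval a (BNot b) then 1 else 0)"

inductive gequiv :: "('s::{semiring_0,monoid_mult} \<Rightarrow> 's) \<Rightarrow> ('t, 'p, 'v, 's) exp \<Rightarrow> ('t, 'p, 'v, 's) exp \<Rightarrow> bool"
  for st :: "'s \<Rightarrow> 's" where
  refl: "gequiv st e e"
| sym: "gequiv st e f \<Longrightarrow> gequiv st f e"
| trans: "gequiv st e f \<Longrightarrow> gequiv st f g \<Longrightarrow> gequiv st e g"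
| cong_GChoice: "gequiv st e e' \<Longrightarrow> gequiv st f f' \<Longrightarrow> gequiv st (GChoice e b f) (GChoice e' b f')"
| cong_Seq: "gequiv st e e' \<Longrightarrow> gequiv st f f' \<Longrightarrow> gequiv st (Seq e f) (Seq e' f')"
| cong_Loop: "gequiv st e e' \<Longrightarrow> gequiv st (Loop e b) (Loop e' b)"
| cong_WChoice: "gequiv st e e' \<Longrightarrow> gequiv st f f' \<Longrightarrow> gequiv st (WChoice e r s f) (WChoice e' r s f')"
| ba_Tst: "ba_equiv b c \<Longrightarrow> gequiv st (Tst b) (Tst c)"
| ba_GChoice: "ba_equiv b c \<Longrightarrow> gequiv st (GChoice e b f) (GChoice e c f)"
| ba_Loop: "ba_equiv b c \<Longrightarrow> gequiv st (Loop e b) (Loop e c)"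
| G1: "gequiv st (GChoice e b e) e"
| G2: "gequiv st (GChoice e b f) (GChoice (Seq (Tst b) e) b f)"
| G3: "gequiv st (GChoice e b f) (GChoice f (BNot b) e)"
| G4: "gequiv st (GChoice (GChoice e b f) c g) (GChoice e (BAnd b c) (GChoice f c g))"
| D1: "gequiv st (WChoice e r s (GChoice f b g)) (GChoice (WChoice e r s f) b (WChoice e r s g))"
| D2: "gequiv st (WChoice e r s (WChoice f t u g)) (WChoice e r 1 (WChoice f (s * t) (s * u) g))"
| D3: "gequiv st (Seq (Tst b) (WChoice e r s f)) (Seq (Tst b) (WChoice (Seq (Tst b) e) r s (Seq (Tst b) f)))"
| S1a: "gequiv st (Seq (Tst BOne) e) e"
| S1b: "gequiv st e (Seq e (Tst BOne))"
| S2: "gequiv st (Seq (Seq e f) g) (Seq e (Seq f g))"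
| S3: "gequiv st (Seq (Tst BZero) e) (Tst BZero)"
| S4: "gequiv st (Seq (WChoice e r s f) g) (WChoice (Seq e g) r s (Seq f g))"
| S5: "gequiv st (Seq (GChoice e b f) g) (GChoice (Seq e g) b (Seq f g))"
| S6: "gequiv st (Seq (Ret v) e) (Ret v)"
| S7: "gequiv st (Seq (Tst b) (Tst c)) (Tst (BAnd b c))"
| L1: "gequiv st (Loop e b) (GChoice (Seq e (Loop e b)) b (Tst BOne))"
| C1: "gequiv st (odot 1) (Tst BOne)"
| C2: "gequiv st (Seq (odot 0) e) (odot 0)"
| W1: "gequiv st (WChoice e r s e) (Seq (odot (r + s)) e)"
| W2: "gequiv st (WChoice e r s f) (WChoice f s r e)"
| W3: "gequiv st (WChoice e r s (WChoice f t u g)) (WChoice (WChoice e r (s * t) f) 1 (s * u) g)"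
| W4: "gequiv st (WChoice e (r * u) s f) (WChoice (Seq (odot u) e) r s f)"
| L2: "gequiv st e (GChoice (WChoice f r s (Tst BOne)) c g) \<Longrightarrow>
       gequiv st (Seq (Tst c) (Loop e b))
                 (Seq (Tst c) (GChoice (Seq (odot (st s * r)) (Seq f (Loop e b))) b (Tst BOne)))"
| F1: "gequiv st g (GChoice (Seq e g) b f) \<Longrightarrow> (\<forall>a. Ef e a = 0) \<Longrightarrow>
       gequiv st g (Seq (Loop e b) f)"

text \<open>Indeterminates are natural numbers (a system uses a finite set X of them).
  A summand t_i is either an expression f or a formal product g x.\<close>
datatype ('t, 'p, 'v, 's) titem = TExp "('t, 'p, 'v, 's) exp" | TVar "('t, 'p, 'v, 's) exp" nat

text \<open>A term GS_{a in At} w_a is given by a list of pairs (a, w_a) enumerating all atoms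
  (the order being the choice of gamma in the definition of GS); a weighted sum
  (+)_{i in I} r_i t_i is a list of pairs (r_i, t_i).\<close>
type_synonym ('t, 'p, 'v, 's) wterm = "('s \<times> ('t, 'p, 'v, 's) titem) list"
type_synonym ('t, 'p, 'v, 's) sterm = "('t atom \<times> ('t, 'p, 'v, 's) wterm) list"

primrec item_sub :: "(nat \<Rightarrow> ('t, 'p, 'v, 's) exp) \<Rightarrow> ('t, 'p, 'v, 's) titem \<Rightarrow> ('t, 'p, 'v, 's) exp" where
  "item_sub h (TExp f) = f"
| "item_sub h (TVar g x) = Seq g (h x)"

primrec wsum_sub :: "(nat \<Rightarrow> ('t, 'p, 'v, 's::{semiring_0,monoid_mult}) exp) \<Rightarrow> ('t, 'p, 'v, 's) wterm \<Rightarrow> ('t, 'p, 'v, 's) exp" where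
  "wsum_sub h [] = odot 0"
| "wsum_sub h (rt # ws) = WChoice (item_sub h (snd rt)) (fst rt) 1 (wsum_sub h ws)"

primrec term_sub :: "(nat \<Rightarrow> ('t::finite, 'p, 'v, 's::{semiring_0,monoid_mult}) exp) \<Rightarrow> ('t, 'p, 'v, 's) sterm \<Rightarrow> ('t, 'p, 'v, 's) exp" where
  "term_sub h [] = Tst BZero"
| "term_sub h (aw # rest) = GChoice (wsum_sub h (snd aw)) (atom_test (fst aw)) (term_sub h rest)"

definition is_term :: "nat set \<Rightarrow> ('t, 'p, 'v, 's) sterm \<Rightarrow> bool" where
  "is_term X tm \<longleftrightarrow> distinct (map fst tm) \<and> set (map fst tm) = UNIV \<and>
     (\<forall>aw\<in>set tm. \<forall>rt\<in>set (snd aw). \<forall>g x. snd rt = TVar g x \<longrightarrow> x \<in> X)"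

definition is_system :: "nat set \<Rightarrow> (nat \<Rightarrow> ('t, 'p, 'v, 's) sterm) \<Rightarrow> bool" where
  "is_system X \<tau> \<longleftrightarrow> finite X \<and> (\<forall>x\<in>X. is_term X (\<tau> x))"

definition salomaa :: "nat set \<Rightarrow> (nat \<Rightarrow> ('t, 'p, 'v, 's::{semiring_0,monoid_mult}) sterm) \<Rightarrow> bool" where
  "salomaa X \<tau> \<longleftrightarrow> is_system X \<tau> \<and>
     (\<forall>x\<in>X. \<forall>aw\<in>set (\<tau> x). \<forall>rt\<in>set (snd aw). \<forall>g y. snd rt = TVar g y \<longrightarrow> (\<forall>a. Ef g a = 0))"

inductive dequiv :: "('s::{semiring_0,monoid_mult} \<Rightarrow> 's) \<Rightarrow> ('t::finite, 'p, 'v, 's) exp \<Rightarrow> ('t, 'p, 'v, 's) exp \<Rightarrow> bool"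
  for st :: "'s \<Rightarrow> 's" where
  base: "gequiv st e f \<Longrightarrow> dequiv st e f"
| refl: "dequiv st e e"
| sym: "dequiv st e f \<Longrightarrow> dequiv st f e"
| trans: "dequiv st e f \<Longrightarrow> dequiv st f g \<Longrightarrow> dequiv st e g"
| cong_GChoice: "dequiv st e e' \<Longrightarrow> dequiv st f f' \<Longrightarrow> dequiv st (GChoice e b f) (GChoice e' b f')"
| cong_Seq: "dequiv st e e' \<Longrightarrow> dequiv st f f' \<Longrightarrow> dequiv st (Seq e f) (Seq e' f')"
| cong_Loop: "dequiv st e e' \<Longrightarrow> dequiv st (Loop e b) (Loop e' b)"
| cong_WChoice: "dequiv st e e' \<Longrightarrow> dequiv st f f' \<Longrightarrow> dequiv st (WChoice e r s f) (WChoice e' r s f')"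
| UA: "salomaa X \<tau> \<Longrightarrow>
       (\<forall>y\<in>X. dequiv st (h y) (term_sub h (\<tau> y))) \<Longrightarrow>
       (\<forall>y\<in>X. dequiv st (k y) (term_sub k (\<tau> y))) \<Longrightarrow>
       x \<in> X \<Longrightarrow> dequiv st (h x) (k x)"

definition positive_sr :: "'s::comm_monoid_add itself \<Rightarrow> bool" where
  "positive_sr _ \<longleftrightarrow> (\<forall>x y::'s. x + y = 0 \<longrightarrow> x = 0 \<and> y = 0)"

definition refinement_sr :: "'s::comm_monoid_add itself \<Rightarrow> bool" where
  "refinement_sr _ \<longleftrightarrow> (\<forall>x y z w::'s. x + y = z + w \<longrightarrow>
     (\<exists>s t u v. s + t = x \<and> s + u = z \<and> u + v = y \<and> t + v = w))"

definition conway :: "('s::{semiring_0,monoid_mult} \<Rightarrow> 's) \<Rightarrow> bool" where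
  "conway st \<longleftrightarrow> (\<forall>a b. st (a + b) = st a * st (b * st a) \<and> st (a * b) = 1 + a * st (b * a) * b)"

end

theory Submission
  imports Defs
begin

definition phi :: "('t,'p,'v,'s) exp \<Rightarrow> ('p,'v,('t,'p,'v,'s) exp) outc \<Rightarrow> ('p,'v,('t,'p,'v,'s) exp) outc" where
  "phi f x = (case x of Tr p e' \<Rightarrow> Tr p (Seq e' f) | _ \<Rightarrow> x)"

definition pre :: "('t,'p,'v,'s) exp \<Rightarrow> ('p,'v,('t,'p,'v,'s) exp) outc set \<Rightarrow> ('p,'v,('t,'p,'v,'s) exp) outc set" where
  "pre f U = {x. x \<noteq> Acc \<and> phi f x \<in> U}"

lemma pre_simps[simp]:
  "Acc \<notin> pre f U" "(Rej \<in> pre f U) = (Rej \<in> U)" "(Rv v \<in> pre f U) = (Rv v \<in> U)"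
  "(Tr p x \<in> pre f U) = (Tr p (Seq x f) \<in> U)"
  by (auto simp: pre_def phi_def)

lemma pre_Acc[simp]: "pre f {Acc} = {}"
  by (auto simp: pre_def phi_def split: outc.splits)

lemma mass_alt:
  fixes \<nu> :: "'a \<Rightarrow> 's::{semiring_0,monoid_mult}"
  assumes "finite S" "{x. \<nu> x \<noteq> 0} \<subseteq> S"
  shows "mass \<nu> U = (\<Sum>x\<in>S. \<nu> x * (if x \<in> U then 1 else 0))"
proof -
  have "mass \<nu> U = (\<Sum>x\<in>S \<inter> U. \<nu> x)" unfolding mass_def
    by (rule sum.mono_neutral_left) (use assms in auto)
  also have "\<dots> = (\<Sum>x\<in>S. if x \<in> U then \<nu> x else 0)" by (simp add: sum.inter_restrict assms)
  also have "\<dots> = (\<Sum>x\<in>S. \<nu> x * (if x \<in> U then 1 else 0))" by (rule sum.cong) auto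
  finally show ?thesis .
qed

lemma mass_empty[simp]: "mass \<nu> {} = 0" by (simp add: mass_def)

lemma mass_point: "mass \<nu> {z} = \<nu> z"
proof -
  have "{x \<in> {z}. \<nu> x \<noteq> 0} = (if \<nu> z = 0 then {} else {z})" by auto
  then show ?thesis by (simp add: mass_def)
qed

lemma fin_supp_delta: "fin_supp (\<lambda>y. if y = z then (1::'s::{semiring_0,monoid_mult}) else 0)"
  unfolding fin_supp_def by (rule finite_subset[of _ "{z}"]) auto

lemma mass_delta:
  "mass (\<lambda>y. if y = z then (1::'s::{semiring_0,monoid_mult}) else 0) U = (if z \<in> U then 1 else 0)"
  by (subst mass_alt[of "{z}"]) auto

lemma mass_zero[simp]: "mass (\<lambda>y. 0) U = 0" by (simp add: mass_def)

lemma bnd_supp: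
  fixes \<nu> :: "'a \<Rightarrow> 's::{semiring_0,monoid_mult}"
  shows "{y. (\<Sum>x\<in>S. \<nu> x * K x y) \<noteq> 0} \<subseteq> (\<Union>x\<in>S. {y. K x y \<noteq> 0})"
proof
  fix y assume "y \<in> {y. (\<Sum>x\<in>S. \<nu> x * K x y) \<noteq> 0}"
  then obtain x where "x \<in> S" "\<nu> x * K x y \<noteq> 0"
    by (auto dest: sum.not_neutral_contains_not_neutral)
  then show "y \<in> (\<Union>x\<in>S. {y. K x y \<noteq> 0})" by (auto intro!: bexI[of _ x])
qed

lemma bnd_fin:
  fixes \<nu> :: "'a \<Rightarrow> 's::{semiring_0,monoid_mult}"
  assumes "finite S" "\<forall>x\<in>S. fin_supp (K x)"
  shows "fin_supp (\<lambda>y. \<Sum>x\<in>S. \<nu> x * K x y)"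
  unfolding fin_supp_def
  by (rule finite_subset[OF bnd_supp]) (use assms in \<open>auto simp: fin_supp_def\<close>)

lemma bnd_mass:
  fixes \<nu> :: "'a \<Rightarrow> 's::{semiring_0,monoid_mult}"
  assumes "finite S" "\<forall>x\<in>S. fin_supp (K x)"
  shows "mass (\<lambda>y. \<Sum>x\<in>S. \<nu> x * K x y) U = (\<Sum>x\<in>S. \<nu> x * mass (K x) U)"
proof -
  define G where "G = (\<Union>x\<in>S. {y. K x y \<noteq> 0})"
  have fG: "finite G" unfolding G_def using assms by (auto simp: fin_supp_def)
  have "mass (\<lambda>y. \<Sum>x\<in>S. \<nu> x * K x y) U = (\<Sum>y\<in>G. (\<Sum>x\<in>S. \<nu> x * K x y) * (if y \<in> U then 1 else 0))"
    by (rule mass_alt[OF fG]) (use bnd_supp[of \<nu> K S] in \<open>auto simp: G_def\<close>)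
  also have "\<dots> = (\<Sum>y\<in>G. \<Sum>x\<in>S. \<nu> x * (K x y * (if y \<in> U then 1 else 0)))"
    by (simp add: sum_distrib_right mult.assoc)
  also have "\<dots> = (\<Sum>x\<in>S. \<Sum>y\<in>G. \<nu> x * (K x y * (if y \<in> U then 1 else 0)))"
    by (rule sum.swap)
  also have "\<dots> = (\<Sum>x\<in>S. \<nu> x * mass (K x) U)"
  proof (rule sum.cong[OF HOL.refl])
    fix x assume "x \<in> S"
    have "mass (K x) U = (\<Sum>y\<in>G. K x y * (if y \<in> U then 1 else 0))"
      by (rule mass_alt[OF fG]) (use \<open>x \<in> S\<close> in \<open>auto simp: G_def\<close>)
    then show "(\<Sum>y\<in>G. \<nu> x * (K x y * (if y \<in> U then 1 else 0))) = \<nu> x * mass (K x) U"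
      by (simp add: sum_distrib_left)
  qed
  finally show ?thesis .
qed

definition KS :: "(('p,'v,('t,'p,'v,'s) exp) outc \<Rightarrow> 's::{semiring_0,monoid_mult}) \<Rightarrow> ('t,'p,'v,'s) exp \<Rightarrow> ('p,'v,('t,'p,'v,'s) exp) outc \<Rightarrow> ('p,'v,('t,'p,'v,'s) exp) outc \<Rightarrow> 's" where
  "KS df f x y = (if x = Acc then df y else if phi f x = y then 1 else 0)"

definition KL :: "('t,'p,'v,'s) exp \<Rightarrow> ('p,'v,('t,'p,'v,'s) exp) outc \<Rightarrow> ('p,'v,('t,'p,'v,'s) exp) outc \<Rightarrow> 's::{semiring_0,monoid_mult}" where
  "KL f x y = (if x \<noteq> Acc \<and> phi f x = y then 1 else 0)"

lemma der_Seq_bnd: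
  "der st (Seq e f) a = (\<lambda>y. \<Sum>x\<in>{x. der st e a x \<noteq> 0}. der st e a x * KS (der st f a) f x y)"
  by (rule ext, simp, rule sum.cong[OF HOL.refl]) (auto simp: KS_def phi_def split: outc.splits)

lemma sum_if_eq:
  fixes c :: "'a \<Rightarrow> 's::{semiring_0,monoid_mult}"
  assumes "finite S"
  shows "(\<Sum>x\<in>S. c x * (if x = x0 then 1 else 0)) = (if x0 \<in> S then c x0 else 0)"
proof -
  have "(\<Sum>x\<in>S. c x * (if x = x0 then 1 else 0)) = (\<Sum>x\<in>S. if x = x0 then c x else 0)"
    by (rule sum.cong) auto
  then show ?thesis using assms by (simp add: sum.delta' split: if_splits)
qed

lemma der_Loop_bnd:
  assumes "beval a b" and fs: "fin_supp (der st e a)"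
  shows "der st (Loop e b) a = (\<lambda>y. \<Sum>x\<in>{x. der st e a x \<noteq> 0}. (st (der st e a Acc) * der st e a x) * KL (Loop e b) x y)"
proof (rule ext)
  fix y
  define S where "S = {x. der st e a x \<noteq> 0}"
  define c where "c x = st (der st e a Acc) * der st e a x" for x
  have fS: "finite S" using fs by (simp add: S_def fin_supp_def)
  have z: "x0 \<notin> S \<Longrightarrow> c x0 = 0" for x0 by (simp add: S_def c_def)
  have gen: "(\<Sum>x\<in>S. c x * KL (Loop e b) x y) = (if Q then c x0 else 0)"
    if "\<And>x. (x \<noteq> Acc \<and> phi (Loop e b) x = y) = (Q \<and> x = x0)" for Q x0
  proof -
    have "(\<Sum>x\<in>S. c x * KL (Loop e b) x y) = (\<Sum>x\<in>S. (if Q then c x else 0) * (if x = x0 then 1 else 0))"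
      by (rule sum.cong) (auto simp: that KL_def)
    also have "\<dots> = (if Q then c x0 else 0)" by (subst sum_if_eq[OF fS]) (auto simp: z)
    finally show ?thesis .
  qed
  show "der st (Loop e b) a y = (\<Sum>x\<in>S. c x * KL (Loop e b) x y)"
  proof (cases y)
    case Acc
    then show ?thesis using assms gen[of False Acc] by (auto simp: phi_def split: outc.splits)
  next
    case Rej
    then show ?thesis using assms gen[of True Rej] by (auto simp: phi_def c_def split: outc.splits)
  next
    case (Rv v)
    then show ?thesis using assms gen[of True "Rv v"] by (auto simp: phi_def c_def split: outc.splits)
  next
    case (Tr p g)
    show ?thesis
    proof (cases "\<exists>e'. g = Seq e' (Loop e b)")
      case True
      then obtain e' where g: "g = Seq e' (Loop e b)" by blast
      show ?thesis using assms gen[of True "Tr p e'"] Tr g by (auto simp: phi_def c_def split: outc.splits)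
    next
      case False
      have "der st (Loop e b) a y = 0" using assms Tr False by (auto split: exp.splits)
      have "(x \<noteq> Acc \<and> phi (Loop e b) x = y) = (False \<and> x = Acc)" for x
        using Tr False by (auto simp: phi_def split: outc.splits)
      then show ?thesis using gen[of False Acc] \<open>der st (Loop e b) a y = 0\<close> by auto
    qed
  qed
qed

lemma fin_KS: "fin_supp df \<Longrightarrow> fin_supp (KS df f x)"
  unfolding KS_def by (cases "x = Acc") (auto intro: fin_supp_delta simp: fin_supp_def)

lemma fin_KL: "fin_supp (KL f x :: _ \<Rightarrow> 's::{semiring_0,monoid_mult})"
  unfolding KL_def by (cases "x = Acc") (auto intro: fin_supp_delta[of "phi f x"] simp: fin_supp_def)

lemma fin_der: "fin_supp (der st e a)"
proof (induction e)
  case (Act p)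
  then show ?case using fin_supp_delta[of "Tr p (Tst BOne)"] by simp
next
  case (Tst b)
  then show ?case using fin_supp_delta[of Acc] fin_supp_delta[of Rej] by (cases "beval a b") auto
next
  case (GChoice e1 b e2)
  then show ?case by (cases "beval a b") auto
next
  case (Seq e1 e2)
  then show ?case unfolding der_Seq_bnd
    by (intro bnd_fin) (use fin_KS[of "der st e2 a"] in \<open>auto simp: fin_supp_def\<close>)
next
  case (Loop e1 b)
  show ?case
  proof (cases "beval a b")
    case True
    then show ?thesis unfolding der_Loop_bnd[OF True Loop] using Loop
      by (intro bnd_fin) (use fin_KL[of "Loop e1 b"] in \<open>auto simp: fin_supp_def\<close>)
  next
    case False
    then show ?thesis using fin_supp_delta[of Acc] by simp
  qed
next
  case (Ret v)
  then show ?case using fin_supp_delta[of "Rv v"] by simp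
next
  case (WChoice e1 r s e2)
  have "{y. r * der st e1 a y + s * der st e2 a y \<noteq> 0} \<subseteq> {y. der st e1 a y \<noteq> 0} \<union> {y. der st e2 a y \<noteq> 0}"
    by auto
  then show ?case using WChoice unfolding fin_supp_def by (auto intro: finite_subset)
qed

lemma mass_lin:
  fixes d1 :: "'a \<Rightarrow> 's::{semiring_0,monoid_mult}"
  assumes "fin_supp d1" "fin_supp d2"
  shows "mass (\<lambda>y. r * d1 y + s * d2 y) U = r * mass d1 U + s * mass d2 U"
proof -
  define S where "S = {x. d1 x \<noteq> 0} \<union> {x. d2 x \<noteq> 0}"
  have fS: "finite S" using assms by (simp add: S_def fin_supp_def)
  have "mass (\<lambda>y. r * d1 y + s * d2 y) U = (\<Sum>x\<in>S. (r * d1 x + s * d2 x) * (if x \<in> U then 1 else 0))"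
    by (rule mass_alt[OF fS]) (auto simp: S_def)
  also have "\<dots> = r * (\<Sum>x\<in>S. d1 x * (if x \<in> U then 1 else 0)) + s * (\<Sum>x\<in>S. d2 x * (if x \<in> U then 1 else 0))"
    by (simp add: sum_distrib_left distrib_right sum.distrib mult.assoc)
  also have "\<dots> = r * mass d1 U + s * mass d2 U"
    by (subst (1 2) mass_alt[OF fS]) (auto simp: S_def)
  finally show ?thesis .
qed

lemma mass_Ret[simp]: "mass (der st (Ret v) a) U = (if Rv v \<in> U then 1 else 0)"
  by (simp add: mass_delta)

lemma mass_Act[simp]: "mass (der st (Act p) a) U = (if Tr p (Tst BOne) \<in> U then 1 else 0)"
  by (simp add: mass_delta)

lemma mass_GChoice[simp]: "mass (der st (GChoice e b f) a) U = (if beval a b then mass (der st e a) U else mass (der st f a) U)"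
  by simp

lemma mass_WChoice[simp]: "mass (der st (WChoice e r s f) a) U = r * mass (der st e a) U + s * mass (der st f a) U"
  by (simp add: mass_lin fin_der)

declare der.simps[simp del]

lemma mass_Tst[simp]: "mass (der st (Tst b) a) U = (if beval a b then (if Acc \<in> U then 1 else 0) else (if Rej \<in> U then 1 else 0))"
  by (cases "beval a b") (simp_all add: der.simps mass_delta)

lemma mass_KS: "fin_supp df \<Longrightarrow> mass (KS df f x) U = (if x = Acc then mass df U else if x \<in> pre f U then 1 else 0)"
proof (cases "x = Acc")
  case False
  then have "KS df f x = (\<lambda>y. if y = phi f x then 1 else 0)" by (auto simp: KS_def)
  then show ?thesis using False by (simp add: mass_delta pre_def)
next
  case True
  have "KS df f Acc = df" by (rule ext) (simp add: KS_def)
  then show ?thesis using True by simp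
qed

lemma mass_KL: "mass (KL f x) U = (if x \<in> pre f U then 1 else 0)"
proof (cases "x = Acc")
  case False
  then have "KL f x = (\<lambda>y. if y = phi f x then 1 else 0)" by (auto simp: KL_def)
  then show ?thesis using False by (simp add: mass_delta pre_def)
next
  case True
  have "KL f Acc = (\<lambda>y. 0)" by (rule ext) (simp add: KL_def)
  then show ?thesis using True by simp
qed

lemma mass_Seq[simp]:
  "mass (der st (Seq e f) a) U = mass (der st e a) {Acc} * mass (der st f a) U + mass (der st e a) (pre f U)"
proof -
  define S where "S = {x. der st e a x \<noteq> 0}"
  have fS: "finite S" using fin_der by (simp add: S_def fin_supp_def)
  have "mass (der st (Seq e f) a) U = (\<Sum>x\<in>S. der st e a x * mass (KS (der st f a) f x) U)"
    unfolding der_Seq_bnd S_def[symmetric]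
    by (rule bnd_mass[OF fS]) (simp add: fin_KS fin_der)
  also have "\<dots> = (\<Sum>x\<in>S. der st e a x * (if x = Acc then 1 else 0) * mass (der st f a) U)
       + (\<Sum>x\<in>S. der st e a x * (if x \<in> pre f U then 1 else 0))"
    by (subst sum.distrib[symmetric], rule sum.cong) (auto simp: mass_KS fin_der)
  also have "\<dots> = der st e a Acc * mass (der st f a) U + mass (der st e a) (pre f U)"
  proof -
    have "(\<Sum>x\<in>S. der st e a x * (if x = Acc then 1 else 0)) = der st e a Acc"
      by (subst sum_if_eq[OF fS]) (auto simp: S_def)
    moreover have "(\<Sum>x\<in>S. der st e a x * (if x = Acc then 1 else 0) * mass (der st f a) U)
       = (\<Sum>x\<in>S. der st e a x * (if x = Acc then 1 else 0)) * mass (der st f a) U"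
      by (simp add: sum_distrib_right)
    moreover have "mass (der st e a) (pre f U) = (\<Sum>x\<in>S. der st e a x * (if x \<in> pre f U then 1 else 0))"
      by (rule mass_alt[OF fS]) (auto simp: S_def)
    ultimately show ?thesis by simp
  qed
  finally show ?thesis by (simp add: mass_point)
qed

lemma mass_Loop[simp]:
  "mass (der st (Loop e b) a) U = (if beval a b then st (mass (der st e a) {Acc}) * mass (der st e a) (pre (Loop e b) U) else (if Acc \<in> U then 1 else 0))"
proof (cases "beval a b")
  case True
  define S where "S = {x. der st e a x \<noteq> 0}"
  have fS: "finite S" using fin_der by (simp add: S_def fin_supp_def)
  have "mass (der st (Loop e b) a) U = (\<Sum>x\<in>S. (st (der st e a Acc) * der st e a x) * mass (KL (Loop e b) x) U)"
    unfolding der_Loop_bnd[OF True fin_der] S_def[symmetric]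
    by (rule bnd_mass[OF fS]) (simp add: fin_KL)
  also have "\<dots> = st (der st e a Acc) * (\<Sum>x\<in>S. der st e a x * (if x \<in> pre (Loop e b) U then 1 else 0))"
    by (simp add: mass_KL sum_distrib_left mult.assoc)
  also have "\<dots> = st (der st e a Acc) * mass (der st e a) (pre (Loop e b) U)"
    by (subst mass_alt[OF fS, of _ "pre (Loop e b) U"]) (auto simp: S_def)
  finally show ?thesis using True by (simp add: mass_point)
next
  case False
  then have "der st (Loop e b) a = (\<lambda>y. if y = Acc then 1 else 0)" by (auto simp: der.simps)
  then show ?thesis using False by (simp add: mass_delta)
qed

lemma der_Acc_Ef: "der st e a Acc = Ef e a"
proof -
  have "mass (der st e a) {Acc} = Ef e a"
    by (induction e) auto
  then show ?thesis by (simp add: mass_point)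
qed

definition sat :: "('s::{semiring_0,monoid_mult} \<Rightarrow> 's) \<Rightarrow> ('p,'v,('t::finite,'p,'v,'s) exp) outc set \<Rightarrow> bool" where
  "sat st U \<longleftrightarrow> (\<forall>p x y. dequiv st x y \<longrightarrow> (Tr p x \<in> U \<longleftrightarrow> Tr p y \<in> U))"

definition beq :: "('s::{semiring_0,monoid_mult} \<Rightarrow> 's) \<Rightarrow> ('t::finite,'p,'v,'s) exp \<Rightarrow> ('t,'p,'v,'s) exp \<Rightarrow> bool" where
  "beq st e f \<longleftrightarrow> (\<forall>a U. sat st U \<longrightarrow> mass (der st e a) U = mass (der st f a) U)"

lemma sat_Tr: "sat st U \<Longrightarrow> dequiv st x y \<Longrightarrow> (Tr p x \<in> U) = (Tr p y \<in> U)"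
  unfolding sat_def by blast

lemma sat_Acc[simp]: "sat st {Acc}" by (simp add: sat_def)

lemma sat_pre: "sat st U \<Longrightarrow> sat st (pre f U)"
proof -
  assume U: "sat st U"
  have "dequiv st (Seq x f) (Seq y f)" if "dequiv st x y" for x y
    using that by (meson dequiv.cong_Seq dequiv.refl)
  then show ?thesis using U unfolding sat_def by auto
qed

lemma outc_set_eqI:
  assumes "\<And>p x. (Tr p x \<in> A) = (Tr p x \<in> B)" "(Acc \<in> A) = (Acc \<in> B)" "(Rej \<in> A) = (Rej \<in> B)"
    "\<And>v. (Rv v \<in> A) = (Rv v \<in> B)"
  shows "A = B"
proof (rule set_eqI)
  fix x show "(x \<in> A) = (x \<in> B)" using assms by (cases x) auto
qed

lemma pre_cong: "sat st U \<Longrightarrow> (\<And>x. dequiv st (Seq x f) (Seq x g)) \<Longrightarrow> pre f U = pre g U"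
  by (rule outc_set_eqI) (auto dest: sat_Tr)

lemma pre_cong2: "sat st U \<Longrightarrow> dequiv st f g \<Longrightarrow> pre f U = pre g U"
  by (rule pre_cong) (auto intro: dequiv.cong_Seq dequiv.refl)


lemma beq_refl: "beq st e e" by (simp add: beq_def)
lemma beq_sym: "beq st e f \<Longrightarrow> beq st f e" by (simp add: beq_def)
lemma beq_trans: "beq st e f \<Longrightarrow> beq st f g \<Longrightarrow> beq st e g" by (simp add: beq_def)

lemma beq_D: "beq st e f \<Longrightarrow> sat st U \<Longrightarrow> mass (der st e a) U = mass (der st f a) U"
  by (simp add: beq_def)

lemma beq_cong_Seq:
  fixes e :: "('t::finite,'p,'v,'s::{semiring_0,monoid_mult}) exp"
  assumes "beq st e e'" "beq st f f'" "dequiv st f f'"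
  shows "beq st (Seq e f) (Seq e' f')"
  unfolding beq_def
proof (intro allI impI)
  fix a and U :: "('p,'v,('t,'p,'v,'s) exp) outc set" assume U: "sat st U"
  have "pre f U = pre f' U" by (rule pre_cong2[OF U assms(3)])
  moreover have "mass (der st e a) (pre f' U) = mass (der st e' a) (pre f' U)"
    by (rule beq_D[OF assms(1) sat_pre[OF U]])
  ultimately show "mass (der st (Seq e f) a) U = mass (der st (Seq e' f') a) U"
    using beq_D[OF assms(1) sat_Acc] beq_D[OF assms(2) U] by simp
qed

lemma beq_cong_Loop:
  fixes e :: "('t::finite,'p,'v,'s::{semiring_0,monoid_mult}) exp"
  assumes "beq st e e'" "dequiv st (Loop e b) (Loop e' b)"
  shows "beq st (Loop e b) (Loop e' b)"
  unfolding beq_def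
proof (intro allI impI)
  fix a and U :: "('p,'v,('t,'p,'v,'s) exp) outc set" assume U: "sat st U"
  have "pre (Loop e b) U = pre (Loop e' b) U" by (rule pre_cong2[OF U assms(2)])
  moreover have "mass (der st e a) (pre (Loop e' b) U) = mass (der st e' a) (pre (Loop e' b) U)"
    by (rule beq_D[OF assms(1) sat_pre[OF U]])
  ultimately show "mass (der st (Loop e b) a) U = mass (der st (Loop e' b) a) U"
    using beq_D[OF assms(1) sat_Acc] by simp
qed

lemma beq_cong_G: "beq st e e' \<Longrightarrow> beq st f f' \<Longrightarrow> beq st (GChoice e b f) (GChoice e' b f')"
  by (simp add: beq_def)

lemma beq_cong_W: "beq st e e' \<Longrightarrow> beq st f f' \<Longrightarrow> beq st (WChoice e r s f) (WChoice e' r s f')"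
  by (simp add: beq_def)

lemma conway_fix: "conway st \<Longrightarrow> st x = 1 + x * st x"
  unfolding conway_def by (metis mult_1_left mult_1_right)

lemma conway_0: "conway st \<Longrightarrow> st 0 = 1"
  using conway_fix[of st 0] by simp

lemma conway_sum: "conway st \<Longrightarrow> st (s + y) = st s + st s * y * st (s + y)"
proof -
  assume c: "conway st"
  have "st (s + y) = st s * st (y * st s)" using c unfolding conway_def by blast
  also have "\<dots> = st s * (1 + y * st s * st (y * st s))" using conway_fix[OF c, of "y * st s"] by simp
  also have "\<dots> = st s + st s * y * (st s * st (y * st s))" by (simp add: distrib_left mult.assoc)
  also have "st s * st (y * st s) = st (s + y)" using c unfolding conway_def by metis
  finally show ?thesis .
qed

lemma beval_atom_ba: "ba_equiv b c \<Longrightarrow> beval a b = beval a c"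
  by (simp add: ba_equiv_def)

lemma mass_odot[simp]: "mass (der st (odot w) a) U = w * (if Acc \<in> U then 1 else 0)"
  by (simp add: odot_def)

lemma mass_split_Acc:
  "mass (der st e a) U = mass (der st e a) {Acc} * (if Acc \<in> U then 1 else 0) + mass (der st e a) (U - {Acc})"
proof -
  define S where "S = {x. der st e a x \<noteq> 0} \<union> {Acc}"
  have fS: "finite S" using fin_der[of st e a] by (simp add: S_def fin_supp_def)
  have sub: "{x. der st e a x \<noteq> 0} \<subseteq> S" by (auto simp: S_def)
  have "mass (der st e a) U = (\<Sum>x\<in>S. der st e a x * (if x \<in> U then 1 else 0))" by (rule mass_alt[OF fS sub])
  also have "\<dots> = (\<Sum>x\<in>S. der st e a x * (if x = Acc then 1 else 0) * (if Acc \<in> U then 1 else 0)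
        + der st e a x * (if x \<in> U - {Acc} then 1 else 0))"
    by (rule sum.cong) auto
  also have "\<dots> = (\<Sum>x\<in>S. der st e a x * (if x = Acc then 1 else 0)) * (if Acc \<in> U then 1 else 0)
        + (\<Sum>x\<in>S. der st e a x * (if x \<in> U - {Acc} then 1 else 0))"
    by (simp add: sum.distrib sum_distrib_right)
  also have "(\<Sum>x\<in>S. der st e a x * (if x = Acc then 1 else 0)) = der st e a Acc"
    by (subst sum_if_eq[OF fS]) (auto simp: S_def)
  also have "(\<Sum>x\<in>S. der st e a x * (if x \<in> U - {Acc} then 1 else 0)) = mass (der st e a) (U - {Acc})"
    by (rule mass_alt[OF fS sub, symmetric])
  finally show ?thesis by (simp add: mass_point)
qed

lemma gequiv_beq:
  fixes e f :: "('t::finite,'p,'v,'s::{semiring_0,monoid_mult}) exp"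
  assumes "gequiv st e f" and cw: "conway st"
  shows "beq st e f"
  using assms(1)
proof (induction rule: gequiv.induct)
  case (refl e) then show ?case by (rule beq_refl)
next
  case (sym e f) then show ?case by (blast intro: beq_sym)
next
  case (trans e f g) then show ?case by (blast intro: beq_trans)
next
  case (cong_GChoice e e' f f' b) then show ?case by (blast intro: beq_cong_G)
next
  case (cong_Seq e e' f f') then show ?case by (blast intro: beq_cong_Seq dequiv.base)
next
  case (cong_Loop e e' b) then show ?case by (blast intro: beq_cong_Loop dequiv.base gequiv.cong_Loop)
next
  case (cong_WChoice e e' f f' r s) then show ?case by (blast intro: beq_cong_W)
next
  case (ba_Tst b c) then show ?case by (simp add: beq_def ba_equiv_def)
next
  case (ba_GChoice b c e f) then show ?case by (simp add: beq_def ba_equiv_def)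
next
  case (ba_Loop b c e)
  then have d: "dequiv st (Loop e b) (Loop e c)" by (intro dequiv.base gequiv.ba_Loop)
  show ?case unfolding beq_def
  proof (intro allI impI)
    fix a and U :: "('p,'v,('t,'p,'v,'s) exp) outc set" assume U: "sat st U"
    show "mass (der st (Loop e b) a) U = mass (der st (Loop e c) a) U"
      using pre_cong2[OF U d] ba_Loop by (simp add: ba_equiv_def)
  qed
next
  case (G1 e b) then show ?case by (simp add: beq_def)
next
  case (G2 e b f) then show ?case by (simp add: beq_def)
next
  case (G3 e b f) then show ?case by (simp add: beq_def)
next
  case (G4 e b f c g) then show ?case by (auto simp: beq_def)
next
  case (D1 e r s f b g) then show ?case by (simp add: beq_def)
next
  case (D2 e r s f t u g) then show ?case by (simp add: beq_def distrib_left mult.assoc)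
next
  case (D3 b e r s f) then show ?case by (simp add: beq_def)
next
  case (S1a e) then show ?case by (simp add: beq_def)
next
  case (S1b e)
  show ?case unfolding beq_def
  proof (intro allI impI)
    fix a and U :: "('p,'v,('t,'p,'v,'s) exp) outc set" assume U: "sat st U"
    have "pre (Tst BOne) U = U - {Acc}"
    proof (rule outc_set_eqI)
      fix p and x :: "('t,'p,'v,'s) exp"
      have "dequiv st (Seq x (Tst BOne)) x" by (rule dequiv.base[OF gequiv.sym[OF gequiv.S1b]])
      then have "(Tr p (Seq x (Tst BOne)) \<in> U) = (Tr p x \<in> U)" by (rule sat_Tr[OF U])
      then show "(Tr p x \<in> pre (Tst BOne) U) = (Tr p x \<in> U - {Acc})" by simp
    qed simp_all
    moreover have "mass (der st (Seq e (Tst BOne)) a) U = mass (der st e a) {Acc} * (if Acc \<in> U then 1 else 0) + mass (der st e a) (pre (Tst BOne) U)"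
      by simp
    ultimately show "mass (der st e a) U = mass (der st (Seq e (Tst BOne)) a) U"
      using mass_split_Acc[of st e a U] by simp
  qed
next
  case (S2 e f g)
  show ?case unfolding beq_def
  proof (intro allI impI)
    fix a and U :: "('p,'v,('t,'p,'v,'s) exp) outc set" assume U: "sat st U"
    have "pre f (pre g U) = pre (Seq f g) U"
    proof (rule outc_set_eqI)
      fix p and x :: "('t,'p,'v,'s) exp"
      have "dequiv st (Seq (Seq x f) g) (Seq x (Seq f g))" by (intro dequiv.base gequiv.S2)
      then have "(Tr p (Seq (Seq x f) g) \<in> U) = (Tr p (Seq x (Seq f g)) \<in> U)" by (rule sat_Tr[OF U])
      then show "(Tr p x \<in> pre f (pre g U)) = (Tr p x \<in> pre (Seq f g) U)" by simp
    qed auto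
    then show "mass (der st (Seq (Seq e f) g) a) U = mass (der st (Seq e (Seq f g)) a) U"
      by (simp add: distrib_left distrib_right mult.assoc add.assoc)
  qed
next
  case (S3 e) then show ?case by (simp add: beq_def)
next
  case (S4 e r s f g) then show ?case by (simp add: beq_def algebra_simps)
next
  case (S5 e b f g) then show ?case by (simp add: beq_def)
next
  case (S6 v e) then show ?case by (simp add: beq_def)
next
  case (S7 b c) then show ?case by (simp add: beq_def)
next
  case (L1 e b)
  show ?case unfolding beq_def
  proof (intro allI impI)
    fix a and U :: "('p,'v,('t,'p,'v,'s) exp) outc set" assume U: "sat st U"
    define A where "A = mass (der st e a) {Acc}"
    define X where "X = mass (der st e a) (pre (Loop e b) U)"
    have "st A * X = (1 + A * st A) * X" using conway_fix[OF cw, of A] by simp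
    then have k: "st A * X = A * (st A * X) + X" by (simp add: distrib_right mult.assoc add.commute)
    show "mass (der st (Loop e b) a) U = mass (der st (GChoice (Seq e (Loop e b)) b (Tst BOne)) a) U"
      using k by (simp add: A_def X_def)
  qed
next
  case C1 then show ?case by (simp add: beq_def)
next
  case (C2 e) then show ?case by (simp add: beq_def)
next
  case (W1 e r s) then show ?case by (simp add: beq_def distrib_right)
next
  case (W2 e r s f) then show ?case by (simp add: beq_def add.commute)
next
  case (W3 e r s f t u g) then show ?case by (simp add: beq_def algebra_simps)
next
  case (W4 e r u s f) then show ?case by (simp add: beq_def mult.assoc)
next
  case (L2 e f r s c g b)
  show ?case unfolding beq_def
  proof (intro allI impI)
    fix a and U :: "('p,'v,('t,'p,'v,'s) exp) outc set" assume U: "sat st U"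
    define P where "P = pre (Loop e b) U"
    have P: "sat st P" unfolding P_def by (rule sat_pre[OF U])
    have H: "mass (der st e a) V = (if beval a c then r * mass (der st f a) V + s * (if Acc \<in> V then 1 else 0) else mass (der st g a) V)"
      if "sat st V" for V using beq_D[OF L2.IH that, of a] by simp
    show "mass (der st (Seq (Tst c) (Loop e b)) a) U =
          mass (der st (Seq (Tst c) (GChoice (Seq (odot (st s * r)) (Seq f (Loop e b))) b (Tst BOne))) a) U"
    proof (cases "beval a c \<and> beval a b")
      case True
      define Af where "Af = mass (der st f a) {Acc}"
      define M where "M = mass (der st f a) P"
      have A: "mass (der st e a) {Acc} = r * Af + s" using H[OF sat_Acc] True by (simp add: Af_def)
      have EP: "mass (der st e a) P = r * M" using H[OF P] True by (simp add: M_def P_def)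
      have cs: "st (r * Af + s) = st s + st s * (r * Af) * st (r * Af + s)"
        using conway_sum[OF cw, of s "r * Af"] by (simp add: add.commute)
      have "st (r * Af + s) * (r * M) = (st s + st s * (r * Af) * st (r * Af + s)) * (r * M)"
        by (rule arg_cong[where f="\<lambda>z. z * (r * M)", OF cs])
      also have "\<dots> = st s * r * (Af * (st (r * Af + s) * (r * M)) + M)"
        by (simp add: distrib_left distrib_right mult.assoc add.commute)
      finally have k: "st (r * Af + s) * (r * M) = st s * r * (Af * (st (r * Af + s) * (r * M)) + M)" .
      have nP: "Acc \<notin> P" by (simp add: P_def)
      have LHS: "mass (der st (Seq (Tst c) (Loop e b)) a) U = st (r * Af + s) * (r * M)"
        using True A EP nP by (simp add: P_def[symmetric])
      have RHS: "mass (der st (Seq (Tst c) (GChoice (Seq (odot (st s * r)) (Seq f (Loop e b))) b (Tst BOne))) a) U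
           = st s * r * (Af * (st (r * Af + s) * (r * M)) + M)"
        using True A EP nP by (simp add: P_def[symmetric] Af_def[symmetric] M_def[symmetric] mult.assoc)
      show ?thesis unfolding LHS RHS by (rule k)
    next
      case False
      then show ?thesis by auto
    qed
  qed
next
  case (F1 g e b f)
  have d: "dequiv st g (Seq (Loop e b) f)" by (intro dequiv.base gequiv.F1 F1.hyps)
  show ?case unfolding beq_def
  proof (intro allI impI)
    fix a and U :: "('p,'v,('t,'p,'v,'s) exp) outc set" assume U: "sat st U"
    have e0: "mass (der st e a) {Acc} = 0" using F1.hyps(2) by (simp add: mass_point der_Acc_Ef)
    have IH: "mass (der st g a) U = mass (der st (GChoice (Seq e g) b f) a) U"
      by (rule beq_D[OF F1.IH U])
    have pe: "pre (Loop e b) (pre f U) = pre g U"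
    proof (rule outc_set_eqI)
      fix p and x :: "('t,'p,'v,'s) exp"
      have "dequiv st (Seq (Seq x (Loop e b)) f) (Seq x g)"
        by (rule dequiv.trans[OF dequiv.base[OF gequiv.S2]])
           (intro dequiv.cong_Seq dequiv.refl dequiv.sym[OF d])
      then have "(Tr p (Seq (Seq x (Loop e b)) f) \<in> U) = (Tr p (Seq x g) \<in> U)" by (rule sat_Tr[OF U])
      then show "(Tr p x \<in> pre (Loop e b) (pre f U)) = (Tr p x \<in> pre g U)" by simp
    qed auto
    show "mass (der st g a) U = mass (der st (Seq (Loop e b) f) a) U"
    proof (cases "beval a b")
      case True
      have "mass (der st (GChoice (Seq e g) b f) a) U = mass (der st e a) (pre g U)"
        using True e0 by simp
      moreover have "mass (der st (Seq (Loop e b) f) a) U = mass (der st e a) (pre g U)"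
        using True e0 pe by (simp add: conway_0[OF cw])
      ultimately show ?thesis using IH by simp
    next
      case False
      have "mass (der st (GChoice (Seq e g) b f) a) U = mass (der st f a) U"
        using False by simp
      moreover have "mass (der st (Seq (Loop e b) f) a) U = mass (der st f a) U"
        using False by simp
      ultimately show ?thesis using IH by simp
    qed
  qed
qed

lemma beq_TVar:
  fixes g :: "('t::finite,'p,'v,'s::{semiring_0,monoid_mult}) exp"
  assumes "\<forall>a. Ef g a = 0" "dequiv st u w"
  shows "beq st (Seq g u) (Seq g w)"
  unfolding beq_def
proof (intro allI impI)
  fix a and U :: "('p,'v,('t,'p,'v,'s) exp) outc set" assume U: "sat st U"
  have "mass (der st g a) {Acc} = 0" using assms(1) by (simp add: mass_point der_Acc_Ef)
  then show "mass (der st (Seq g u) a) U = mass (der st (Seq g w) a) U"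
    using pre_cong2[OF U assms(2)] by simp
qed

lemma wsum_beq:
  fixes h k :: "nat \<Rightarrow> ('t::finite,'p,'v,'s::{semiring_0,monoid_mult}) exp"
  assumes "\<forall>rt\<in>set ws. \<forall>g y. snd rt = TVar g y \<longrightarrow> y \<in> X \<and> (\<forall>a. Ef g a = 0)"
    and hk: "\<forall>y\<in>X. dequiv st (h y) (k y)"
  shows "beq st (wsum_sub h ws) (wsum_sub k ws)"
  using assms(1)
proof (induction ws)
  case Nil then show ?case by (simp add: beq_refl)
next
  case (Cons rt ws)
  have "beq st (item_sub h (snd rt)) (item_sub k (snd rt))"
  proof (cases "snd rt")
    case (TExp f) then show ?thesis by (simp add: beq_refl)
  next
    case (TVar g y)
    then have "y \<in> X" "\<forall>a. Ef g a = 0" using Cons.prems by auto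
    then show ?thesis using TVar hk by (simp add: beq_TVar)
  qed
  moreover have "beq st (wsum_sub h ws) (wsum_sub k ws)" using Cons by simp
  ultimately show ?case by (simp add: beq_cong_W)
qed

lemma term_beq:
  fixes h k :: "nat \<Rightarrow> ('t::finite,'p,'v,'s::{semiring_0,monoid_mult}) exp"
  assumes "\<forall>aw\<in>set tm. \<forall>rt\<in>set (snd aw). \<forall>g y. snd rt = TVar g y \<longrightarrow> y \<in> X \<and> (\<forall>a. Ef g a = 0)"
    and hk: "\<forall>y\<in>X. dequiv st (h y) (k y)"
  shows "beq st (term_sub h tm) (term_sub k tm)"
  using assms(1)
proof (induction tm)
  case Nil then show ?case by (simp add: beq_refl)
next
  case (Cons aw tm)
  have "beq st (wsum_sub h (snd aw)) (wsum_sub k (snd aw))"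
    by (rule wsum_beq[OF _ hk]) (use Cons.prems in auto)
  then show ?case using Cons by (simp add: beq_cong_G)
qed

lemma dequiv_beq:
  fixes e f :: "('t::finite,'p,'v,'s::{semiring_0,monoid_mult}) exp"
  assumes "dequiv st e f" and cw: "conway st"
  shows "beq st e f"
  using assms(1)
proof (induction rule: dequiv.induct)
  case (base e f) then show ?case using gequiv_beq[OF _ cw] by blast
next
  case (refl e) then show ?case by (rule beq_refl)
next
  case (sym e f) then show ?case by (blast intro: beq_sym)
next
  case (trans e f g) then show ?case by (blast intro: beq_trans)
next
  case (cong_GChoice e e' f f' b) then show ?case by (blast intro: beq_cong_G)
next
  case (cong_Seq e e' f f') then show ?case by (blast intro: beq_cong_Seq)
next
  case (cong_Loop e e' b) then show ?case by (blast intro: beq_cong_Loop dequiv.cong_Loop)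
next
  case (cong_WChoice e e' f f' r s) then show ?case by (blast intro: beq_cong_W)
next
  case (UA X \<tau> h k x)
  have hs: "\<forall>y\<in>X. dequiv st (h y) (term_sub h (\<tau> y))" using UA by blast
  have ks: "\<forall>y\<in>X. dequiv st (k y) (term_sub k (\<tau> y))" using UA by blast
  have hk: "\<forall>y\<in>X. dequiv st (h y) (k y)"
    using dequiv.UA[OF UA(1) hs ks] by blast
  have tm: "\<forall>aw\<in>set (\<tau> x). \<forall>rt\<in>set (snd aw). \<forall>g y. snd rt = TVar g y \<longrightarrow> y \<in> X \<and> (\<forall>a. Ef g a = 0)"
    using UA unfolding salomaa_def is_system_def is_term_def by blast
  have "beq st (h x) (term_sub h (\<tau> x))" using UA by blast
  moreover have "beq st (k x) (term_sub k (\<tau> x))" using UA by blast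
  moreover have "beq st (term_sub h (\<tau> x)) (term_sub k (\<tau> x))" by (rule term_beq[OF tm hk])
  ultimately show ?case by (blast intro: beq_trans beq_sym)
qed

lemma pos_sum_zero:
  fixes \<nu> :: "'a \<Rightarrow> 's::comm_monoid_add"
  assumes pos: "positive_sr TYPE('s)" and "finite B" "sum \<nu> B = 0"
  shows "\<forall>b\<in>B. \<nu> b = 0"
  using assms(2,3)
proof (induction B rule: finite_induct)
  case empty then show ?case by simp
next
  case (insert b B)
  then have "\<nu> b + sum \<nu> B = 0" by simp
  then have "\<nu> b = 0 \<and> sum \<nu> B = 0" using pos unfolding positive_sr_def by blast
  then show ?case using insert by simp
qed

lemma split_lemma:
  fixes \<nu> :: "'a \<Rightarrow> 's::comm_monoid_add"
  assumes pos: "positive_sr TYPE('s)" and ref: "refinement_sr TYPE('s)" and "finite B"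
  shows "x + z = sum \<nu> B \<Longrightarrow> \<exists>\<alpha> \<beta>. (\<forall>b\<in>B. \<nu> b = \<alpha> b + \<beta> b) \<and> sum \<alpha> B = x \<and> sum \<beta> B = z"
  using assms(3)
proof (induction B arbitrary: x z rule: finite_induct)
  case empty
  then have "x + z = 0" by simp
  then have "x = 0 \<and> z = 0" using pos unfolding positive_sr_def by blast
  then show ?case by (intro exI[of _ "\<lambda>_. 0"]) simp
next
  case (insert b B)
  then have "x + z = \<nu> b + sum \<nu> B" by simp
  then obtain s t u v where stuv: "s + t = x" "s + u = \<nu> b" "u + v = z" "t + v = sum \<nu> B"
    using ref unfolding refinement_sr_def by blast
  obtain \<alpha> \<beta> where ab: "\<forall>c\<in>B. \<nu> c = \<alpha> c + \<beta> c" "sum \<alpha> B = t" "sum \<beta> B = v"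
    using insert.IH[OF stuv(4)] by blast
  have s1: "sum (\<alpha>(b := s)) B = sum \<alpha> B" using insert.hyps by (intro sum.cong) auto
  have s2: "sum (\<beta>(b := u)) B = sum \<beta> B" using insert.hyps by (intro sum.cong) auto
  show ?case
    by (rule exI[of _ "\<alpha>(b := s)"], rule exI[of _ "\<beta>(b := u)"])
       (use insert.hyps ab stuv s1 s2 in auto)
qed

lemma matrix_lemma:
  fixes \<mu> :: "'a \<Rightarrow> 's::comm_monoid_add" and \<nu> :: "'b \<Rightarrow> 's"
  assumes pos: "positive_sr TYPE('s)" and ref: "refinement_sr TYPE('s)" and "finite A" "finite B"
  shows "sum \<mu> A = sum \<nu> B \<Longrightarrow> \<exists>W. (\<forall>a\<in>A. sum (W a) B = \<mu> a) \<and> (\<forall>b\<in>B. (\<Sum>a\<in>A. W a b) = \<nu> b)"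
  using assms(3)
proof (induction A arbitrary: \<nu> rule: finite_induct)
  case empty
  then have "\<forall>b\<in>B. \<nu> b = 0" using pos_sum_zero[OF pos assms(4), of \<nu>] by simp
  then show ?case by auto
next
  case (insert a A)
  then have "\<mu> a + sum \<mu> A = sum \<nu> B" by simp
  then obtain \<alpha> \<beta> where ab: "\<forall>b\<in>B. \<nu> b = \<alpha> b + \<beta> b" "sum \<alpha> B = \<mu> a" "sum \<beta> B = sum \<mu> A"
    using split_lemma[OF pos ref assms(4)] by blast
  obtain W where W: "\<forall>a\<in>A. sum (W a) B = \<mu> a" "\<forall>b\<in>B. (\<Sum>a\<in>A. W a b) = \<beta> b"
    using insert.IH[of \<beta>] ab(3) by auto
  have col: "(\<Sum>a'\<in>A. (W(a := \<alpha>)) a' b) = (\<Sum>a'\<in>A. W a' b)" for b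
    using insert.hyps by (intro sum.cong) auto
  show ?case
    by (rule exI[of _ "W(a := \<alpha>)"]) (use insert.hyps ab W col in auto)
qed

lemma coupling:
  fixes \<nu>1 \<nu>2 :: "'x \<Rightarrow> 's::comm_monoid_add" and Rel :: "'x \<Rightarrow> 'x \<Rightarrow> bool"
  assumes pos: "positive_sr TYPE('s)" and ref: "refinement_sr TYPE('s)"
    and rf: "\<And>x. Rel x x" and sy: "\<And>x y. Rel x y \<Longrightarrow> Rel y x" and tr: "\<And>x y z. Rel x y \<Longrightarrow> Rel y z \<Longrightarrow> Rel x z"
    and f1: "finite SA" and f2: "finite SB"
    and z1: "\<And>x. x \<notin> SA \<Longrightarrow> \<nu>1 x = 0" and z2: "\<And>x. x \<notin> SB \<Longrightarrow> \<nu>2 x = 0"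
    and cls: "\<And>x. sum \<nu>1 (SA \<inter> {z. Rel x z}) = sum \<nu>2 (SB \<inter> {z. Rel x z})"
  shows "\<exists>W. (\<forall>x y. W x y \<noteq> 0 \<longrightarrow> Rel x y \<and> x \<in> SA \<and> y \<in> SB) \<and> (\<forall>x. sum (W x) SB = \<nu>1 x) \<and> (\<forall>y. (\<Sum>x\<in>SA. W x y) = \<nu>2 y)"
proof -
  define C where "C x = {z. Rel x z}" for x
  have "\<forall>K. \<exists>W. K \<in> range C \<longrightarrow> (\<forall>a\<in>SA \<inter> K. sum (W a) (SB \<inter> K) = \<nu>1 a) \<and> (\<forall>b\<in>SB \<inter> K. (\<Sum>a\<in>SA \<inter> K. W a b) = \<nu>2 b)"
  proof
    fix K show "\<exists>W. K \<in> range C \<longrightarrow> (\<forall>a\<in>SA \<inter> K. sum (W a) (SB \<inter> K) = \<nu>1 a) \<and> (\<forall>b\<in>SB \<inter> K. (\<Sum>a\<in>SA \<inter> K. W a b) = \<nu>2 b)"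
    proof (cases "K \<in> range C")
      case True
      then obtain x where K: "K = C x" by blast
      have "sum \<nu>1 (SA \<inter> K) = sum \<nu>2 (SB \<inter> K)" using cls[of x] by (simp add: K C_def)
      then show ?thesis using matrix_lemma[OF pos ref, of "SA \<inter> K" "SB \<inter> K" \<nu>1 \<nu>2] f1 f2 by auto
    qed auto
  qed
  then obtain Wc where Wc: "\<And>K. K \<in> range C \<Longrightarrow> (\<forall>a\<in>SA \<inter> K. sum (Wc K a) (SB \<inter> K) = \<nu>1 a) \<and> (\<forall>b\<in>SB \<inter> K. (\<Sum>a\<in>SA \<inter> K. Wc K a b) = \<nu>2 b)"
    by metis
  have Ceq: "Rel a b \<Longrightarrow> C a = C b" for a b unfolding C_def using sy tr by blast
  define W where "W a b = (if Rel a b \<and> a \<in> SA \<and> b \<in> SB then Wc (C a) a b else 0)" for a b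
  have row: "sum (W x) SB = \<nu>1 x" for x
  proof (cases "x \<in> SA")
    case True
    have "sum (W x) SB = (\<Sum>b\<in>SB \<inter> C x. Wc (C x) x b)"
      unfolding W_def using True f2 by (simp add: sum.If_cases C_def Int_def)
    also have "\<dots> = \<nu>1 x" using Wc[of "C x"] True rf by (auto simp: C_def)
    finally show ?thesis .
  next
    case False then show ?thesis using z1 by (simp add: W_def)
  qed
  have colm: "(\<Sum>x\<in>SA. W x y) = \<nu>2 y" for y
  proof (cases "y \<in> SB")
    case True
    have "(\<Sum>x\<in>SA. W x y) = (\<Sum>a\<in>SA \<inter> {a. Rel a y}. Wc (C a) a y)"
      unfolding W_def using True f1 by (simp add: sum.If_cases Int_def)
    also have "\<dots> = (\<Sum>a\<in>SA \<inter> C y. Wc (C y) a y)"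
    proof -
      have "SA \<inter> {a. Rel a y} = SA \<inter> C y" unfolding C_def using sy by blast
      moreover have "\<And>a. a \<in> SA \<inter> C y \<Longrightarrow> Wc (C a) a y = Wc (C y) a y"
        using Ceq sy unfolding C_def by fastforce
      ultimately show ?thesis by (auto intro: sum.cong)
    qed
    also have "\<dots> = \<nu>2 y" using Wc[of "C y"] True rf by (auto simp: C_def)
    finally show ?thesis .
  next
    case False then show ?thesis using z2 by (simp add: W_def)
  qed
  have nz: "\<forall>x y. W x y \<noteq> 0 \<longrightarrow> Rel x y \<and> x \<in> SA \<and> y \<in> SB"
    by (auto simp: W_def split: if_splits)
  show ?thesis
    by (rule exI[of _ W]) (use nz row colm in blast)
qed

lemma mass_Tr_image: "mass \<nu> (Tr p ` K) = sum (\<lambda>z. \<nu> (Tr p z)) {z\<in>K. \<nu> (Tr p z) \<noteq> 0}"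
proof -
  have "{x \<in> Tr p ` K. \<nu> x \<noteq> 0} = Tr p ` {z\<in>K. \<nu> (Tr p z) \<noteq> 0}" by auto
  moreover have inj: "inj_on (Tr p) {z\<in>K. \<nu> (Tr p z) \<noteq> 0}" by (auto simp: inj_on_def)
  ultimately show ?thesis unfolding mass_def by (simp add: sum.reindex[OF inj])
qed

lemma sat_Tr_class: "sat st (Tr p ` {z. dequiv st x z})"
  unfolding sat_def by (auto intro: dequiv.trans dequiv.sym)

lemma sat_noTr: "(\<And>p x. Tr p x \<notin> U) \<Longrightarrow> sat st U"
  unfolding sat_def by auto

lemma mass_via:
  fixes \<nu> :: "'a \<Rightarrow> 's::comm_monoid_add"
  assumes "{x\<in>A. \<nu> x \<noteq> 0} = g ` {z. w z \<noteq> 0}" "inj g" "\<And>z. \<nu> (g z) = w z"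
    "finite S" "{z. w z \<noteq> 0} \<subseteq> S"
  shows "mass \<nu> A = sum w S"
proof -
  have "mass \<nu> A = sum \<nu> (g ` {z. w z \<noteq> 0})" unfolding mass_def using assms(1) by simp
  also have "\<dots> = sum w {z. w z \<noteq> 0}" using assms(2,3) by (simp add: sum.reindex inj_on_def inj_def)
  also have "\<dots> = sum w S" by (rule sum.mono_neutral_left) (use assms(4,5) in auto)
  finally show ?thesis .
qed

theorem mainTheorem10:
  fixes st :: "'s::{semiring_0,monoid_mult} \<Rightarrow> 's"
    and e f :: "('t::finite, 'p, 'v, 's) exp"
  assumes "positive_sr TYPE('s)"
    and "refinement_sr TYPE('s)"
    and "conway st"
    and "dequiv st e f"
  shows "bisimilar st e f"
proof -
  note pos = assms(1) and ref = assms(2) and cw = assms(3)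
  define R where "R = {(x, y). dequiv st x (y :: ('t, 'p, 'v, 's) exp)}"
  define S where "S e a p = {x. der st e a (Tr p x) \<noteq> 0}" for e :: "('t, 'p, 'v, 's) exp" and a p
  have fS: "finite (S e a p)" for e a p
  proof -
    have "S e a p = Tr p -` {x. der st e a x \<noteq> 0}" by (auto simp: S_def)
    moreover have "finite (Tr p -` {x. der st e a x \<noteq> 0})"
      by (rule finite_vimageI) (use fin_der[of st e a] in \<open>auto simp: fin_supp_def inj_def\<close>)
    ultimately show ?thesis by simp
  qed
  define P where "P e f a p W \<longleftrightarrow>
      (\<forall>x y. W x y \<noteq> 0 \<longrightarrow> dequiv st x y \<and> x \<in> S e a p \<and> y \<in> S f a p) \<and>
      (\<forall>x. sum (W x) (S f a p) = der st e a (Tr p x)) \<and>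
      (\<forall>y. (\<Sum>x\<in>S e a p. W x y) = der st f a (Tr p y))"
    for e f :: "('t, 'p, 'v, 's) exp" and a p and W :: "('t, 'p, 'v, 's) exp \<Rightarrow> ('t, 'p, 'v, 's) exp \<Rightarrow> 's"
  have ex: "\<exists>W. P e f a p W" if d: "dequiv st e f" for e f a p
  proof -
    have b: "beq st e f" by (rule dequiv_beq[OF d cw])
    have cls: "sum (\<lambda>x. der st e a (Tr p x)) (S e a p \<inter> {z. dequiv st x z}) = sum (\<lambda>x. der st f a (Tr p x)) (S f a p \<inter> {z. dequiv st x z})" for x
    proof -
      have "mass (der st e a) (Tr p ` {z. dequiv st x z}) = mass (der st f a) (Tr p ` {z. dequiv st x z})"
        by (rule beq_D[OF b sat_Tr_class])
      moreover have "{z \<in> {z. dequiv st x z}. der st g a (Tr p z) \<noteq> 0} = S g a p \<inter> {z. dequiv st x z}" for g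
        by (auto simp: S_def)
      ultimately show ?thesis by (simp add: mass_Tr_image)
    qed
    have "\<exists>W. (\<forall>x y. W x y \<noteq> 0 \<longrightarrow> dequiv st x y \<and> x \<in> S e a p \<and> y \<in> S f a p) \<and>
      (\<forall>x. sum (W x) (S f a p) = der st e a (Tr p x)) \<and> (\<forall>y. (\<Sum>x\<in>S e a p. W x y) = der st f a (Tr p y))"
    proof (rule coupling[OF pos ref, where Rel="dequiv st" and SA="S e a p" and SB="S f a p"])
      show "\<And>x. dequiv st x x" by (rule dequiv.refl)
      show "\<And>x y. dequiv st x y \<Longrightarrow> dequiv st y x" by (rule dequiv.sym)
      show "\<And>x y z. dequiv st x y \<Longrightarrow> dequiv st y z \<Longrightarrow> dequiv st x z" by (rule dequiv.trans)
    qed (use fS cls in \<open>auto simp: S_def\<close>)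
    then show ?thesis unfolding P_def by blast
  qed
  define Ws where "Ws e f a p = (SOME W. P e f a p W)" for e f :: "('t, 'p, 'v, 's) exp" and a p
  have WsP: "P e f a p (Ws e f a p)" if "dequiv st e f" for e f a p
    unfolding Ws_def by (rule someI_ex[OF ex[OF that]])
  define \<rho> where "\<rho> q a z = (case z of Acc \<Rightarrow> der st (fst q) a Acc | Rej \<Rightarrow> der st (fst q) a Rej
      | Rv v \<Rightarrow> der st (fst q) a (Rv v) | Tr p xy \<Rightarrow> Ws (fst q) (snd q) a p (fst xy) (snd xy))"
    for q :: "('t, 'p, 'v, 's) exp \<times> ('t, 'p, 'v, 's) exp" and a and z :: "('p, 'v, ('t, 'p, 'v, 's) exp \<times> ('t, 'p, 'v, 's) exp) outc"
  have aut: "is_automaton R \<rho>"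
    unfolding is_automaton_def
  proof (intro ballI allI conjI impI)
    fix q a assume q: "q \<in> R"
    obtain e1 f1 where q': "q = (e1, f1)" "dequiv st e1 f1" using q by (auto simp: R_def)
    define V where "V = {v. der st e1 a (Rv v) \<noteq> 0}"
    define T where "T = {(p, x, y). der st e1 a (Tr p x) \<noteq> 0 \<and> der st f1 a (Tr p y) \<noteq> 0}"
    define gg where "gg zz = (case fst zz of Tr p x \<Rightarrow> (case snd zz of Tr p' y \<Rightarrow> (p, x, y) | _ \<Rightarrow> undefined) | _ \<Rightarrow> undefined)"
      for zz :: "('p, 'v, ('t, 'p, 'v, 's) exp) outc \<times> ('p, 'v, ('t, 'p, 'v, 's) exp) outc"
    have fV: "finite V"
    proof -
      have "V = Rv -` {x. der st e1 a x \<noteq> 0}" by (auto simp: V_def)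
      moreover have "finite (Rv -` {x. der st e1 a x \<noteq> 0})"
        by (rule finite_vimageI) (use fin_der[of st e1 a] in \<open>auto simp: fin_supp_def inj_def\<close>)
      ultimately show ?thesis by simp
    qed
    have fT: "finite T"
    proof -
      have "T \<subseteq> gg ` ({x. der st e1 a x \<noteq> 0} \<times> {x. der st f1 a x \<noteq> 0})"
      proof
        fix t assume "t \<in> T"
        then obtain p x y where t: "t = (p, x, y)" "der st e1 a (Tr p x) \<noteq> 0" "der st f1 a (Tr p y) \<noteq> 0"
          by (auto simp: T_def)
        then have "t = gg (Tr p x, Tr p y)" by (simp add: gg_def)
        then show "t \<in> gg ` ({x. der st e1 a x \<noteq> 0} \<times> {x. der st f1 a x \<noteq> 0})" using t by blast
      qed
      moreover have "finite ({x. der st e1 a x \<noteq> 0} \<times> {x. der st f1 a x \<noteq> 0})"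
        using fin_der[of st e1 a] fin_der[of st f1 a] unfolding fin_supp_def by simp
      ultimately show ?thesis by (meson finite_imageI finite_subset)
    qed
    have "{z. \<rho> q a z \<noteq> 0} \<subseteq> {Acc, Rej} \<union> Rv ` V \<union> (\<lambda>(p, x, y). Tr p (x, y)) ` T"
    proof
      fix z assume z: "z \<in> {z. \<rho> q a z \<noteq> 0}"
      show "z \<in> {Acc, Rej} \<union> Rv ` V \<union> (\<lambda>(p, x, y). Tr p (x, y)) ` T"
      proof (cases z)
        case (Rv v) then show ?thesis using z q' by (auto simp: \<rho>_def V_def)
      next
        case (Tr p xy)
        obtain x y where xy: "xy = (x, y)" by (cases xy)
        have "Ws e1 f1 a p x y \<noteq> 0" using z Tr xy q' by (simp add: \<rho>_def)
        then have "(p, x, y) \<in> T" using WsP[OF q'(2), of a p] unfolding P_def T_def S_def by blast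
        then show ?thesis using Tr xy by force
      qed auto
    qed
    moreover have "finite ({Acc, Rej} \<union> Rv ` V \<union> (\<lambda>(p, x, y). Tr p (x, y)) ` T)"
      using fV fT by simp
    ultimately show "fin_supp (\<rho> q a)" unfolding fin_supp_def by (rule finite_subset)
  next
    fix q a p y assume q: "q \<in> R" and nz: "\<rho> q a (Tr p y) \<noteq> 0"
    obtain e1 f1 where q': "q = (e1, f1)" "dequiv st e1 f1" using q by (auto simp: R_def)
    obtain y1 y2 where y: "y = (y1, y2)" by (cases y)
    have "Ws e1 f1 a p y1 y2 \<noteq> 0" using nz q' y by (simp add: \<rho>_def)
    then have "dequiv st y1 y2" using WsP[OF q'(2), of a p] unfolding P_def by blast
    then show "y \<in> R" using y by (simp add: R_def)
  qed
  have hom1: "is_hom R \<rho> UNIV (der st) fst"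
    unfolding is_hom_def
  proof (intro ballI allI conjI impI)
    fix q a p y assume q: "q \<in> R"
    obtain e1 f1 where q': "q = (e1, f1)" "dequiv st e1 f1" using q by (auto simp: R_def)
    note W = WsP[OF q'(2), of a p, unfolded P_def]
    show "der st (fst q) a (Tr p y) = mass (\<rho> q a) {Tr p x' |x'. x' \<in> R \<and> fst x' = y}"
    proof -
      have "mass (\<rho> q a) {Tr p x' |x'. x' \<in> R \<and> fst x' = y} = sum (Ws e1 f1 a p y) (S f1 a p)"
      proof (rule mass_via[where g="\<lambda>z. Tr p (y, z)"])
        show "{x \<in> {Tr p x' |x'. x' \<in> R \<and> fst x' = y}. \<rho> q a x \<noteq> 0} = (\<lambda>z. Tr p (y, z)) ` {z. Ws e1 f1 a p y z \<noteq> 0}"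
          using W q' by (auto simp: \<rho>_def R_def)
      qed (use W q' fS in \<open>auto simp: \<rho>_def inj_def\<close>)
      then show ?thesis using W q' by simp
    qed
  qed (auto simp: \<rho>_def)
  have hom2: "is_hom R \<rho> UNIV (der st) snd"
    unfolding is_hom_def
  proof (intro ballI allI conjI impI)
    fix q a assume q: "q \<in> R"
    obtain e1 f1 where q': "q = (e1, f1)" "dequiv st e1 f1" using q by (auto simp: R_def)
    have b: "beq st e1 f1" by (rule dequiv_beq[OF q'(2) cw])
    have "mass (der st e1 a) {Acc} = mass (der st f1 a) {Acc}" by (rule beq_D[OF b sat_Acc])
    then show "der st (snd q) a Acc = \<rho> q a Acc" using q' by (simp add: \<rho>_def mass_point)
    have "mass (der st e1 a) {Rej} = mass (der st f1 a) {Rej}" by (rule beq_D[OF b sat_noTr]) auto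
    then show "der st (snd q) a Rej = \<rho> q a Rej" using q' by (simp add: \<rho>_def mass_point)
    fix v
    have "mass (der st e1 a) {Rv v} = mass (der st f1 a) {Rv v}" by (rule beq_D[OF b sat_noTr]) auto
    then show "der st (snd q) a (Rv v) = \<rho> q a (Rv v)" using q' by (simp add: \<rho>_def mass_point)
  next
    fix q a p y assume q: "q \<in> R"
    obtain e1 f1 where q': "q = (e1, f1)" "dequiv st e1 f1" using q by (auto simp: R_def)
    note W = WsP[OF q'(2), of a p, unfolded P_def]
    show "der st (snd q) a (Tr p y) = mass (\<rho> q a) {Tr p x' |x'. x' \<in> R \<and> snd x' = y}"
    proof -
      have "mass (\<rho> q a) {Tr p x' |x'. x' \<in> R \<and> snd x' = y} = sum (\<lambda>z. Ws e1 f1 a p z y) (S e1 a p)"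
      proof (rule mass_via[where g="\<lambda>z. Tr p (z, y)"])
        show "{x \<in> {Tr p x' |x'. x' \<in> R \<and> snd x' = y}. \<rho> q a x \<noteq> 0} = (\<lambda>z. Tr p (z, y)) ` {z. Ws e1 f1 a p z y \<noteq> 0}"
          using W q' by (auto simp: \<rho>_def R_def)
      qed (use W q' fS in \<open>auto simp: \<rho>_def inj_def\<close>)
      then show ?thesis using W q' by simp
    qed
  qed simp
  have "is_bisim UNIV (der st) UNIV (der st) R"
    unfolding is_bisim_def by (intro conjI exI[of _ \<rho>]) (use aut hom1 hom2 in auto)
  moreover have "(e, f) \<in> R" using assms(4) by (simp add: R_def)
  ultimately show ?thesis unfolding bisimilar_def by blast
qed

end
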